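(* Let $G$ be a finite group and let $m\in\mu(G)$. Then $|G|\cdot m^{\phi(m)}$ divides $\det(\mathbf{J}+\mathbf{Q}(\mathcal{P}(G)))$.
   Context: For a finite group $G$, the power graph $\mathcal{P}(G)$ is the simple undirected graph with vertex set $G$, two distinct vertices $x,y$ being adjacent iff $\langle x\rangle\subseteq\langle y\rangle$ or $\langle y\rangle\subseteq\langle x\rangle$. $\mathbf{Q}(\mathcal{P}(G))=\mathbf{\Delta}-\mathbf{A}$ is its Laplacian matrix ($\mathbf{A}$ the adjacency matrix, $\mathbf{\Delta}$ the diagonal matrix of vertex degrees), and $\mathbf{J}$ is the $|G|\times|G|$ all-ones matrix. $\mu(G)$ is the set of element orders of $G$ that are maximal with respect to divisibility among all element orders of $G$. $\phi$ is Euler's totient function. *)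

theory Defs
  imports "HOL-Algebra.Algebra" "HOL-Algebra.Multiplicative_Group"
    "HOL-Combinatorics.Permutations" "HOL-Number_Theory.Totient"
begin

definition det_on :: "'a set \<Rightarrow> ('a \<Rightarrow> 'a \<Rightarrow> int) \<Rightarrow> int" where
  "det_on S M = (\<Sum>p | p permutes S. sign p * (\<Prod>i\<in>S. M i (p i)))"

definition power_adj :: "('a, 'b) monoid_scheme \<Rightarrow> 'a \<Rightarrow> 'a \<Rightarrow> bool" where
  "power_adj G x y \<longleftrightarrow> x \<noteq> y \<and>
     (generate G {x} \<subseteq> generate G {y} \<or> generate G {y} \<subseteq> generate G {x})"

definition power_deg :: "('a, 'b) monoid_scheme \<Rightarrow> 'a \<Rightarrow> nat" where
  "power_deg G x = card {y \<in> carrier G. power_adj G x y}"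

definition power_laplacian :: "('a, 'b) monoid_scheme \<Rightarrow> 'a \<Rightarrow> 'a \<Rightarrow> int" where
  "power_laplacian G x y =
     (if x = y then int (power_deg G x) else - (if power_adj G x y then 1 else 0))"

definition max_orders :: "('a, 'b) monoid_scheme \<Rightarrow> nat set" where
  "max_orders G = {m. (\<exists>x\<in>carrier G. group.ord G x = m) \<and>
       (\<forall>y\<in>carrier G. m dvd group.ord G y \<longrightarrow> group.ord G y = m)}"

end

theory Submission imports Defs begin

lemma det_on_cong:
  assumes "\<And>i j. i \<in> S \<Longrightarrow> j \<in> S \<Longrightarrow> M i j = M' i j"
  shows "det_on S M = det_on S M'"
  unfolding det_on_def
proof (rule sum.cong[OF refl])
  fix p assume "p \<in> {p. p permutes S}"
  then have p: "p permutes S" by simp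
  have "(\<Prod>i\<in>S. M i (p i)) = (\<Prod>i\<in>S. M' i (p i))"
    by (rule prod.cong[OF refl]) (simp add: assms permutes_in_image[OF p])
  then show "sign p * (\<Prod>i\<in>S. M i (p i)) = sign p * (\<Prod>i\<in>S. M' i (p i))" by simp
qed

lemma prod_upd:
  assumes "finite S" "i0 \<in> S"
  shows "(\<Prod>i\<in>S. (M(i0:=r)) i (p i)) = (r (p i0) :: int) * (\<Prod>i\<in>S-{i0}. M i (p i))"
proof -
  have "(\<Prod>i\<in>S. (M(i0:=r)) i (p i)) = (M(i0:=r)) i0 (p i0) * (\<Prod>i\<in>S-{i0}. (M(i0:=r)) i (p i))"
    using assms by (simp add: prod.remove)
  also have "(\<Prod>i\<in>S-{i0}. (M(i0:=r)) i (p i)) = (\<Prod>i\<in>S-{i0}. M i (p i))"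
    by (rule prod.cong) auto
  finally show ?thesis by simp
qed

lemma det_on_row_add2:
  assumes "finite S" "i0 \<in> S"
  shows "det_on S (M(i0 := (\<lambda>j. a j + b j))) = det_on S (M(i0 := a)) + det_on S (M(i0 := b))"
proof -
  have "det_on S (M(i0 := (\<lambda>j. a j + b j))) = (\<Sum>p | p permutes S. sign p * ((a (p i0) + b (p i0)) * (\<Prod>i\<in>S-{i0}. M i (p i))))"
    unfolding det_on_def by (simp only: prod_upd[OF assms])
  also have "\<dots> = (\<Sum>p | p permutes S. sign p * (a (p i0) * (\<Prod>i\<in>S-{i0}. M i (p i)))) + (\<Sum>p | p permutes S. sign p * (b (p i0) * (\<Prod>i\<in>S-{i0}. M i (p i))))"
    by (simp only: sum.distrib[symmetric] distrib_left distrib_right)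
  also have "\<dots> = det_on S (M(i0 := a)) + det_on S (M(i0 := b))"
    unfolding det_on_def by (simp only: prod_upd[OF assms])
  finally show ?thesis .
qed

lemma det_on_row_scale:
  assumes "finite S" "i0 \<in> S"
  shows "det_on S (M(i0 := (\<lambda>j. c * a j))) = c * det_on S (M(i0 := a))"
proof -
  have "det_on S (M(i0 := (\<lambda>j. c * a j))) = (\<Sum>p | p permutes S. sign p * ((c * a (p i0)) * (\<Prod>i\<in>S-{i0}. M i (p i))))"
    unfolding det_on_def by (simp only: prod_upd[OF assms])
  also have "\<dots> = c * (\<Sum>p | p permutes S. sign p * (a (p i0) * (\<Prod>i\<in>S-{i0}. M i (p i))))"
    unfolding sum_distrib_left by (rule sum.cong) (simp_all only: mult_ac)
  also have "\<dots> = c * det_on S (M(i0 := a))"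
    unfolding det_on_def by (simp only: prod_upd[OF assms])
  finally show ?thesis .
qed

lemma det_on_row_sum:
  assumes "finite S" "i0 \<in> S" "finite K"
  shows "det_on S (M(i0 := (\<lambda>j. \<Sum>k\<in>K. f k j))) = (\<Sum>k\<in>K. det_on S (M(i0 := f k)))"
proof -
  have "det_on S (M(i0 := (\<lambda>j. \<Sum>k\<in>K. f k j))) = (\<Sum>p | p permutes S. sign p * ((\<Sum>k\<in>K. f k (p i0)) * (\<Prod>i\<in>S-{i0}. M i (p i))))"
    unfolding det_on_def by (simp only: prod_upd[OF assms(1,2)])
  also have "\<dots> = (\<Sum>p | p permutes S. \<Sum>k\<in>K. sign p * (f k (p i0) * (\<Prod>i\<in>S-{i0}. M i (p i))))"
    by (simp only: sum_distrib_left sum_distrib_right)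
  also have "\<dots> = (\<Sum>k\<in>K. \<Sum>p | p permutes S. sign p * (f k (p i0) * (\<Prod>i\<in>S-{i0}. M i (p i))))"
    by (rule sum.swap)
  also have "\<dots> = (\<Sum>k\<in>K. det_on S (M(i0 := f k)))"
    unfolding det_on_def by (simp only: prod_upd[OF assms(1,2)])
  finally show ?thesis .
qed

lemma det_on_identical_rows:
  assumes S: "finite S" and i: "i0 \<in> S" "i1 \<in> S" "i0 \<noteq> i1" and eq: "M i0 = M i1"
  shows "det_on S M = 0"
proof -
  let ?t = "transpose i0 i1"
  let ?f = "\<lambda>p. sign p * (\<Prod>i\<in>S. M i (p i))"
  have t: "?t permutes S" by (rule permutes_swap_id[OF i(1,2)])
  have Mt: "M (?t i) = M i" for i using eq by (auto simp: transpose_def)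
  have key: "?f (p \<circ> ?t) = - ?f p" if p: "p permutes S" for p
  proof -
    have pp: "permutation p" using p S permutation_permutes by blast
    have pt: "permutation ?t" using t S permutation_permutes by blast
    have "sign (p \<circ> ?t) = - sign p"
      using i by (simp add: sign_compose[OF pp pt] sign_swap_id)
    moreover have "(\<Prod>i\<in>S. M i ((p \<circ> ?t) i)) = (\<Prod>i\<in>S. M i (p i))"
    proof -
      have "(\<Prod>i\<in>S. M i ((p \<circ> ?t) i)) = (\<Prod>i\<in>S. M (?t i) (p (?t (?t i))))"
        using prod.permute[OF t, of "\<lambda>i. M i (p (?t i))"] by (simp add: comp_def)
      also have "\<dots> = (\<Prod>i\<in>S. M i (p i))" by (simp add: Mt)
      finally show ?thesis .
    qed
    ultimately show ?thesis by simp
  qed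
  have "det_on S M = (\<Sum>p | p permutes S. ?f (p \<circ> ?t))"
    unfolding det_on_def
    apply (rule sum.reindex_bij_witness[of _ "\<lambda>p. p \<circ> ?t" "\<lambda>p. p \<circ> ?t"])
    using t by (auto simp: comp_assoc permutes_compose)
  also have "\<dots> = (\<Sum>p | p permutes S. - ?f p)"
    by (rule sum.cong[OF refl]) (use key in auto)
  also have "\<dots> = - det_on S M"
    unfolding det_on_def by (simp add: sum_negf)
  finally show ?thesis by simp
qed

lemma det_on_row_addmult:
  assumes "finite S" "i0 \<in> S" "i1 \<in> S" "i0 \<noteq> i1"
  shows "det_on S (M(i0 := (\<lambda>j. M i0 j + c * M i1 j))) = det_on S M"
proof -
  have "det_on S (M(i0 := (\<lambda>j. M i0 j + c * M i1 j))) =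
     det_on S (M(i0 := M i0)) + c * det_on S (M(i0 := M i1))"
    using det_on_row_add2[OF assms(1,2)] det_on_row_scale[OF assms(1,2)] by simp
  moreover have h0: "det_on S (M(i0 := M i1)) = 0"
    by (rule det_on_identical_rows[OF assms(1,2,3,4)]) simp
  moreover have h1: "M(i0 := M i0) = M" by simp
  ultimately show ?thesis by simp
qed

lemma det_on_addrows:
  assumes "finite T" "T \<subseteq> S" "finite S" "i0 \<in> S" "i0 \<notin> T"
  shows "det_on S (\<lambda>i j. if i \<in> T then M i j + c * M i0 j else M i j) = det_on S M"
  using assms
proof (induction T rule: finite_induct)
  case empty then show ?case by simp
next
  case (insert t T)
  let ?MT = "\<lambda>i j. if i \<in> T then M i j + c * M i0 j else M i j"
  have "(\<lambda>i j. if i \<in> insert t T then M i j + c * M i0 j else M i j) =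
        ?MT(t := (\<lambda>j. ?MT t j + c * ?MT i0 j))"
    using insert by (auto simp: fun_eq_iff)
  moreover have "det_on S (?MT(t := (\<lambda>j. ?MT t j + c * ?MT i0 j))) = det_on S ?MT"
    using insert by (intro det_on_row_addmult) auto
  ultimately show ?case using insert by simp
qed

lemma det_on_rowsum_replace:
  assumes "finite S" "i0 \<in> S"
  shows "det_on S (M(i0 := (\<lambda>j. \<Sum>i\<in>S. M i j))) = det_on S M"
proof -
  have "det_on S (M(i0 := (\<lambda>j. \<Sum>i\<in>S. M i j))) = (\<Sum>i\<in>S. det_on S (M(i0 := M i)))"
    using det_on_row_sum[OF assms assms(1), of M M] by simp
  also have "\<dots> = det_on S (M(i0 := M i0)) + (\<Sum>i\<in>S-{i0}. det_on S (M(i0 := M i)))"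
    using assms by (simp add: sum.remove)
  also have "(\<Sum>i\<in>S-{i0}. det_on S (M(i0 := M i))) = 0"
  proof (rule sum.neutral, rule ballI)
    fix x assume "x \<in> S - {i0}"
    then show "det_on S (M(i0 := M x)) = 0" using assms
      by (intro det_on_identical_rows[of S i0 x]) auto
  qed
  finally show ?thesis by (simp only: fun_upd_triv add_0_right)
qed

lemma det_on_transpose:
  assumes S: "finite S"
  shows "det_on S (\<lambda>i j. M j i) = det_on S M"
proof -
  have "det_on S (\<lambda>i j. M j i) = (\<Sum>p | p permutes S. sign (inv_into UNIV p) * (\<Prod>i\<in>S. M i (inv_into UNIV p i)))"
    unfolding det_on_def
  proof (rule sum.cong[OF refl])
    fix p assume "p \<in> {p. p permutes S}"
    then have p: "p permutes S" by simp
    have "permutation p" using p S permutation_permutes by blast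
    then have "sign (inv_into UNIV p) = sign p" by (simp add: sign_inverse)
    moreover have "(\<Prod>i\<in>S. M (p i) i) = (\<Prod>i\<in>S. M i (inv_into UNIV p i))"
      using prod.permute[OF permutes_inv[OF p], of "\<lambda>i. M (p i) i"]
      by (simp add: comp_def permutes_inverses(1)[OF p])
    ultimately show "sign p * (\<Prod>i\<in>S. M (p i) i) = sign (inv_into UNIV p) * (\<Prod>i\<in>S. M i (inv_into UNIV p i))" by simp
  qed
  also have "\<dots> = det_on S M"
    unfolding det_on_def
    apply (rule sum.reindex_bij_witness[of _ "inv_into UNIV" "inv_into UNIV"])
    by (auto simp: permutes_inv permutes_inv_inv)
  finally show ?thesis .
qed

lemma det_on_dvd_rows:
  assumes S: "finite S" and R: "R \<subseteq> S" and d: "\<And>i j. i \<in> R \<Longrightarrow> j \<in> S \<Longrightarrow> c dvd M i j"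
  shows "c ^ card R dvd det_on S M"
  unfolding det_on_def
proof (rule dvd_sum)
  fix p assume "p \<in> {p. p permutes S}"
  then have p: "p permutes S" by simp
  have fR: "finite R" using R S finite_subset by blast
  have "(\<Prod>i\<in>S. M i (p i)) = (\<Prod>i\<in>R. M i (p i)) * (\<Prod>i\<in>S-R. M i (p i))"
    using prod.subset_diff[OF R S] by (simp add: mult.commute)
  moreover have "c ^ card R dvd (\<Prod>i\<in>R. M i (p i))"
  proof -
    have "(\<Prod>i\<in>R. c) dvd (\<Prod>i\<in>R. M i (p i))"
      by (rule prod_dvd_prod) (use R d permutes_in_image[OF p] in auto)
    then show ?thesis by simp
  qed
  ultimately show "c ^ card R dvd sign p * (\<Prod>i\<in>S. M i (p i))" by simp
qed


lemma (in group) gen_in: "y \<in> carrier G \<Longrightarrow> y \<in> generate G {y}"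
  by (rule generate.incl) simp

lemma (in group) gen_sub:
  assumes "y \<in> generate G {g}" "g \<in> carrier G"
  shows "generate G {y} \<subseteq> generate G {g}"
  using assms by (intro generate_subgroup_incl generate_is_subgroup) auto

lemma (in group) adj_char:
  assumes fin: "finite (carrier G)" and g: "g \<in> carrier G"
    and maxi: "\<And>y. y \<in> carrier G \<Longrightarrow> ord g dvd ord y \<Longrightarrow> ord y = ord g"
    and s: "s \<in> carrier G" "generate G {s} = generate G {g}" and y: "y \<in> carrier G"
  shows "power_adj G s y \<longleftrightarrow> y \<noteq> s \<and> y \<in> generate G {g}"
proof
  assume adj: "power_adj G s y"
  then have ne: "y \<noteq> s" unfolding power_adj_def by auto
  have "y \<in> generate G {g}"
  proof (cases "generate G {y} \<subseteq> generate G {s}")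
    case True
    then show ?thesis using gen_in[OF y] s by auto
  next
    case False
    then have sub: "generate G {g} \<subseteq> generate G {y}" using adj s unfolding power_adj_def by auto
    have "g \<in> generate G {y}" using sub gen_in[OF g] by auto
    then obtain k :: nat where k: "g = y [^] k"
      using generate_pow_on_finite_carrier[OF fin y] by auto
    have "ord g dvd ord y"
    proof (cases "k = 0")
      case True then show ?thesis using k by (simp add: ord_pow_gen[OF y])
    next
      case False
      then have "ord g = ord y div gcd (ord y) k" using k by (simp add: ord_pow_gen[OF y])
      then show ?thesis by (metis dvd_div_mult_self gcd_dvd1 dvd_triv_left)
    qed
    then have "ord y = ord g" using maxi y by blast
    then have "card (generate G {g}) = card (generate G {y})"
      using generate_pow_card[OF g] generate_pow_card[OF y] by simp
    moreover have "finite (generate G {y})"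
      using generate_incl[of "{y}"] y fin finite_subset by blast
    ultimately have "generate G {g} = generate G {y}" using sub card_subset_eq by blast
    then show ?thesis using gen_in[OF y] by simp
  qed
  then show "y \<noteq> s \<and> y \<in> generate G {g}" using ne by simp
next
  assume "y \<noteq> s \<and> y \<in> generate G {g}"
  then show "power_adj G s y" unfolding power_adj_def using gen_sub[OF _ g] s by auto
qed

lemma (in group) deg_char:
  assumes fin: "finite (carrier G)" and g: "g \<in> carrier G"
    and maxi: "\<And>y. y \<in> carrier G \<Longrightarrow> ord g dvd ord y \<Longrightarrow> ord y = ord g"
    and s: "s \<in> carrier G" "generate G {s} = generate G {g}"
  shows "power_deg G s = ord g - 1"
proof -
  have "{y \<in> carrier G. power_adj G s y} = generate G {g} - {s}"
    using adj_char[OF fin g maxi s] generate_incl[of "{g}"] g by auto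
  moreover have "s \<in> generate G {g}" using s gen_in by blast
  moreover have "finite (generate G {g})"
    using generate_incl[of "{g}"] g fin finite_subset by blast
  ultimately show ?thesis unfolding power_deg_def using generate_pow_card[OF g] by simp
qed

lemma (in group) lap_char:
  assumes fin: "finite (carrier G)" and g: "g \<in> carrier G"
    and maxi: "\<And>y. y \<in> carrier G \<Longrightarrow> ord g dvd ord y \<Longrightarrow> ord y = ord g"
    and s: "s \<in> carrier G" "generate G {s} = generate G {g}" and y: "y \<in> carrier G"
  shows "power_laplacian G s y = int (ord g) * (if y = s then 1 else 0) - (if y \<in> generate G {g} then 1 else 0)"
proof -
  have "ord g \<ge> 1" using ord_ge_1[OF fin g] .
  moreover have "s \<in> generate G {g}" using s gen_in by blast
  ultimately show ?thesis
    unfolding power_laplacian_def using deg_char[OF fin g maxi s] adj_char[OF fin g maxi s y]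
    by auto
qed

lemma power_adj_sym: "power_adj G x y = power_adj G y x"
  unfolding power_adj_def by auto

lemma lap_sym: "power_laplacian G x y = power_laplacian G y x"
  unfolding power_laplacian_def power_adj_def by auto

lemma lap_rowsum:
  assumes fin: "finite (carrier G)" and x: "x \<in> carrier G"
  shows "(\<Sum>y\<in>carrier G. power_laplacian G x y) = 0"
proof -
  have "(\<Sum>y\<in>carrier G. power_laplacian G x y) =
        power_laplacian G x x + (\<Sum>y\<in>carrier G - {x}. power_laplacian G x y)"
    using fin x by (simp add: sum.remove)
  also have "(\<Sum>y\<in>carrier G - {x}. power_laplacian G x y) = (\<Sum>y\<in>carrier G - {x}. - (if power_adj G x y then 1 else 0))"
    unfolding power_laplacian_def by (rule sum.cong) auto
  also have "\<dots> = - (\<Sum>y\<in>{y \<in> carrier G - {x}. power_adj G x y}. 1)"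
    unfolding sum_negf by (subst sum.inter_filter) (use fin in auto)
  also have "{y \<in> carrier G - {x}. power_adj G x y} = {y \<in> carrier G. power_adj G x y}"
    unfolding power_adj_def by auto
  finally show ?thesis unfolding power_laplacian_def power_deg_def by simp
qed


theorem theorem3p7:
  fixes G :: "('a, 'b) monoid_scheme" and m :: nat
  assumes "group G" and "finite (carrier G)" and "m \<in> max_orders G"
  shows "int (order G * m ^ totient m) dvd
           det_on (carrier G) (\<lambda>x y. 1 + power_laplacian G x y)"
proof -
  interpret group G by (rule assms(1))
  define V where "V = carrier G"
  define n where "n = order G"
  have fin: "finite V" using assms(2) V_def by simp
  have nV: "n = card V" unfolding n_def V_def order_def by simp
  obtain g where g: "g \<in> carrier G" "ord g = m"
    and maxi0: "\<forall>y\<in>carrier G. m dvd ord y \<longrightarrow> ord y = m"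
    using assms(3) unfolding max_orders_def by auto
  have maxi: "\<And>y. y \<in> carrier G \<Longrightarrow> ord g dvd ord y \<Longrightarrow> ord y = ord g"
    using maxi0 g by auto
  have m1: "m \<ge> 1" using ord_ge_1[OF assms(2) g(1)] g(2) by simp
  have mn: "m dvd n" using ord_dvd_group_order[OF g(1)] g(2) n_def by simp
  define N where "N = generate G {g}"
  have finN: "finite N" unfolding N_def
    using generate_incl[of "{g}"] g assms(2) finite_subset by blast
  define S where "S = (\<lambda>k::nat. g [^]\<^bsub>G\<^esub> k) ` totatives m"
  have S_props: "s \<in> carrier G \<and> generate G {s} = N \<and> ord s = m" if sS: "s \<in> S" for s
  proof -
    obtain k where k: "k \<in> totatives m" "s = g [^]\<^bsub>G\<^esub> k" using sS S_def by auto
    have sc: "s \<in> carrier G" using k g by simp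
    have ords: "ord s = m"
      using pow_ord_eq_ord_iff[OF assms(2) g(1), of k] k g(2) by (simp add: totatives_def)
    have sN: "s \<in> N" unfolding N_def using generate_pow_on_finite_carrier[OF assms(2) g(1)] k by auto
    have sub: "generate G {s} \<subseteq> N" unfolding N_def using gen_sub[OF sN[unfolded N_def] g(1)] .
    have "card (generate G {s}) = card N"
      unfolding N_def using generate_pow_card[OF g(1)] generate_pow_card[OF sc] ords g(2) by simp
    then have "generate G {s} = N" using card_subset_eq[OF finN sub] by simp
    then show ?thesis using sc ords by simp
  qed
  have cardS: "card S = totient m"
  proof -
    have "totatives m \<subseteq> {1..ord g}" using g(2) by (auto simp: totatives_def)
    then have "inj_on (\<lambda>k::nat. g [^]\<^bsub>G\<^esub> k) (totatives m)"
      using ord_inj'[OF g(1)] inj_on_subset by blast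
    then show ?thesis unfolding S_def totient_def by (simp add: card_image)
  qed
  have gS: "g \<in> S"
  proof -
    have "1 \<in> totatives m" using m1 by (simp add: totatives_def)
    then show ?thesis unfolding S_def using g(1) by (metis image_eqI nat_pow_eone)
  qed
  have SV: "S \<subseteq> V" using S_props V_def by auto
  let ?Q = "power_laplacian G"
  define A where "A = (\<lambda>x y. 1 + ?Q x y)"
  have Qs: "?Q s y = int m * (if y = s then 1 else 0) - (if y \<in> N then 1 else 0)"
    if "s \<in> S" "y \<in> V" for s y
    using lap_char[OF assms(2) g(1) maxi, of s y] S_props[OF that(1)] that(2) g(2) N_def V_def by simp
  have rs: "(\<Sum>y\<in>V. ?Q x y) = 0" if "x \<in> V" for x
    using lap_rowsum[OF assms(2)] that V_def by simp
  have one: "\<one>\<^bsub>G\<^esub> \<in> V" using V_def by simp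
  have "det_on V A = det_on V (A(\<one>\<^bsub>G\<^esub> := (\<lambda>y. \<Sum>x\<in>V. A x y)))"
    using det_on_rowsum_replace[OF fin one, of A] by simp
  also have "\<dots> = det_on V (A(\<one>\<^bsub>G\<^esub> := (\<lambda>y. int n * 1)))"
  proof (rule det_on_cong)
    fix i j assume "i \<in> V" "j \<in> V"
    have "(\<Sum>x\<in>V. A x j) = (\<Sum>x\<in>V. 1) + (\<Sum>x\<in>V. ?Q j x)"
      unfolding A_def by (simp add: sum.distrib lap_sym[of G _ j])
    also have "\<dots> = int n" using rs[OF \<open>j \<in> V\<close>] nV by simp
    finally show "(A(\<one>\<^bsub>G\<^esub> := (\<lambda>y. \<Sum>x\<in>V. A x y))) i j = (A(\<one>\<^bsub>G\<^esub> := (\<lambda>y. int n * 1))) i j" by simp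
  qed
  also have "\<dots> = int n * det_on V (A(\<one>\<^bsub>G\<^esub> := (\<lambda>y. 1)))"
    using det_on_row_scale[OF fin one, of A "int n" "\<lambda>y. 1"] by simp
  finally have st1: "det_on V A = int n * det_on V (A(\<one>\<^bsub>G\<^esub> := (\<lambda>y. 1)))" .
  define A1 where "A1 = A(\<one>\<^bsub>G\<^esub> := (\<lambda>y. 1))"
  define A2 where "A2 = (\<lambda>i j. if i = \<one>\<^bsub>G\<^esub> then 1 else ?Q i j)"
  have "det_on V A1 = det_on V (\<lambda>i j. if i \<in> V - {\<one>\<^bsub>G\<^esub>} then A1 i j + (-1) * A1 \<one>\<^bsub>G\<^esub> j else A1 i j)"
    by (rule det_on_addrows[symmetric]) (use fin one in auto)
  also have "\<dots> = det_on V A2"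
    by (rule det_on_cong) (auto simp: A1_def A2_def A_def)
  also have "\<dots> = det_on V (\<lambda>i j. A2 j i)"
    by (rule det_on_transpose[symmetric, OF fin])
  finally have st2: "det_on V A1 = det_on V (\<lambda>i j. A2 j i)" .
  define B where "B = (\<lambda>i j. A2 j i)"
  have "det_on V B = det_on V (B(\<one>\<^bsub>G\<^esub> := (\<lambda>y. \<Sum>x\<in>V. B x y)))"
    using det_on_rowsum_replace[OF fin one, of B] by simp
  also have "\<dots> = det_on V (B(\<one>\<^bsub>G\<^esub> := (\<lambda>y. int n * (if y = \<one>\<^bsub>G\<^esub> then 1 else 0))))"
  proof (rule det_on_cong)
    fix i j assume "i \<in> V" "j \<in> V"
    have "(\<Sum>x\<in>V. B x j) = int n * (if j = \<one>\<^bsub>G\<^esub> then 1 else 0)"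
    proof (cases "j = \<one>\<^bsub>G\<^esub>")
      case True then show ?thesis unfolding B_def A2_def using nV by simp
    next
      case False then show ?thesis unfolding B_def A2_def using rs[OF \<open>j \<in> V\<close>] by simp
    qed
    then show "(B(\<one>\<^bsub>G\<^esub> := (\<lambda>y. \<Sum>x\<in>V. B x y))) i j = (B(\<one>\<^bsub>G\<^esub> := (\<lambda>y. int n * (if y = \<one>\<^bsub>G\<^esub> then 1 else 0)))) i j" by simp
  qed
  also have "\<dots> = int n * det_on V (B(\<one>\<^bsub>G\<^esub> := (\<lambda>y. if y = \<one>\<^bsub>G\<^esub> then 1 else 0)))"
    using det_on_row_scale[OF fin one, of B "int n" "\<lambda>y. if y = \<one>\<^bsub>G\<^esub> then 1 else 0"] by simp
  finally have st3: "det_on V B = int n * det_on V (B(\<one>\<^bsub>G\<^esub> := (\<lambda>y. if y = \<one>\<^bsub>G\<^esub> then 1 else 0)))" .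
  define B2 where "B2 = B(\<one>\<^bsub>G\<^esub> := (\<lambda>y. if y = \<one>\<^bsub>G\<^esub> then 1 else (0::int)))"
  define T where "T = S - {g, \<one>\<^bsub>G\<^esub>}"
  have finT: "finite T" using finite_subset[OF SV fin] T_def by simp
  have st4: "det_on V B2 = det_on V (\<lambda>i j. if i \<in> T then B2 i j + (-1) * B2 g j else B2 i j)"
    by (rule det_on_addrows[symmetric]) (use finT fin SV gS T_def in auto)
  have st5: "int m ^ card T dvd det_on V (\<lambda>i j. if i \<in> T then B2 i j + (-1) * B2 g j else B2 i j)"
  proof (rule det_on_dvd_rows[OF fin])
    show "T \<subseteq> V" using SV T_def by auto
  next
    fix i j assume i: "i \<in> T" and j: "j \<in> V"
    have iS: "i \<in> S" and i1: "i \<noteq> \<one>\<^bsub>G\<^esub>" and ig: "i \<noteq> g" using i T_def by auto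
    have "m \<noteq> 1" using S_props[OF iS] i1 ord_eq_1 by blast
    then have g1: "g \<noteq> \<one>\<^bsub>G\<^esub>" using g by auto
    have "B2 i j + (-1) * B2 g j = (if j = \<one>\<^bsub>G\<^esub> then 0 else ?Q i j - ?Q g j)"
      unfolding B2_def B_def A2_def using i1 g1 lap_sym[of G j] by simp
    also have "\<dots> = (if j = \<one>\<^bsub>G\<^esub> then 0 else int m * ((if j = i then 1 else 0) - (if j = g then 1 else 0)))"
      using Qs[OF iS j] Qs[OF gS j] by (simp add: algebra_simps)
    finally show "int m dvd (if i \<in> T then B2 i j + (-1) * B2 g j else B2 i j)"
      using i by simp
  qed
  have main: "det_on V A = int n * (int n * det_on V (\<lambda>i j. if i \<in> T then B2 i j + (-1) * B2 g j else B2 i j))"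
    using st1 st2 st3 st4 A1_def B_def B2_def by simp
  obtain c where c0: "det_on V (\<lambda>i j. if i \<in> T then B2 i j + (-1) * B2 g j else B2 i j) = int m ^ card T * c"
    using st5 by (elim dvdE)
  have c: "det_on V A = int n * (int n * (int m ^ card T * c))"
    using main c0 by simp
  show ?thesis
  proof (cases "m = 1")
    case True
    then show ?thesis using c unfolding A_def V_def n_def by simp
  next
    case False
    have "\<one>\<^bsub>G\<^esub> \<notin> S" using S_props False by (metis ord_id)
    then have "T = S - {g}" unfolding T_def by auto
    then have cT: "card T = totient m - 1" using gS cardS by (simp add: card_Diff_singleton)
    have "finite S" using finite_subset[OF SV fin] .
    then have "card S > 0" using gS by (auto simp: card_gt_0_iff)
    then have "totient m \<ge> 1" using cardS by linarith
    then have k: "totient m = Suc (card T)" using cT by simp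
    obtain d where d: "n = m * d" using mn by (elim dvdE)
    have "det_on V A = int (n * m ^ totient m) * (int d * c)"
      unfolding c k d by (simp add: algebra_simps)
    then show ?thesis unfolding A_def V_def n_def by simp
  qed
qed

end
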